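(* The forgetful morphism $\imath:\mathcal{Q}(r,n)\to\mathcal{A}(r,n)$ is universally injective. That is, for any field $K\supseteq\mathbb{C}$ and any $K$-point $\alpha_K$ of $\mathcal{A}(r,n)$, there is at most one $K$-point $\varrho_K$ of $\mathcal{Q}(r,n)$ with $\imath(\varrho_K)=\alpha_K$.
   Context: Fix $V_\infty=\mathbb{C}^r$ with basis $e_a$ and $A_re_a=e_{a+1}$, $e_{r+1}=0$. $\mathcal{Q}(r,n)$ is the fine moduli space of framed cyclic representations $(V,B_1,B_2,B_3,I,J)$ up to $GL(V)$. These have $\dim V=n$ and satisfy $[B_1,B_2]+IJ=0$, $JB_3=A_rJ$, $B_3I=IA_r$ and $[B_3,B_i]=0$ for $i=1,2$; moreover no proper nonzero $B_1,B_2,B_3$-invariant subspace contains $\mathrm{Im}\,I$. $\mathcal{A}(r,n)$ is the fine moduli space of stable ADHM data $(V,B_1,B_2,I,J)$ with $[B_1,B_2]+IJ=0$ and no proper $B_1,B_2$-invariant subspace containing $\mathrm{Im}\,I$. The map $\imath$ forgets $B_3$. *)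

theory Defs
  imports Complex_Main "Jordan_Normal_Form.Matrix"
begin

text \<open>Shift matrix A_r on V_infty = K^r: A_r e_a = e_(a+1), e_(r+1) = 0 (0-based indices).\<close>
definition shift_mat :: "nat \<Rightarrow> 'k::field mat" where
  "shift_mat r = mat r r (\<lambda>(i,j). if i = j + 1 then 1 else 0)"

definition is_subspace :: "nat \<Rightarrow> 'k::field vec set \<Rightarrow> bool" where
  "is_subspace n S \<longleftrightarrow> S \<subseteq> carrier_vec n \<and> 0\<^sub>v n \<in> S \<and>
     (\<forall>u\<in>S. \<forall>v\<in>S. u + v \<in> S) \<and> (\<forall>c. \<forall>v\<in>S. c \<cdot>\<^sub>v v \<in> S)"

definition mat_invariant :: "'k::field mat \<Rightarrow> 'k vec set \<Rightarrow> bool" where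
  "mat_invariant B S \<longleftrightarrow> (\<forall>v\<in>S. B *\<^sub>v v \<in> S)"

definition mat_image :: "nat \<Rightarrow> 'k::field mat \<Rightarrow> 'k vec set" where
  "mat_image r I = {I *\<^sub>v w | w. w \<in> carrier_vec r}"

definition stable_ADHM :: "nat \<Rightarrow> nat \<Rightarrow> 'k::field mat \<Rightarrow> 'k mat \<Rightarrow> 'k mat \<Rightarrow> 'k mat \<Rightarrow> bool" where
  "stable_ADHM r n B1 B2 I J \<longleftrightarrow>
     B1 \<in> carrier_mat n n \<and> B2 \<in> carrier_mat n n \<and> I \<in> carrier_mat n r \<and> J \<in> carrier_mat r n \<and>
     B1 * B2 - B2 * B1 + I * J = 0\<^sub>m n n \<and>
     (\<forall>S. is_subspace n S \<and> mat_invariant B1 S \<and> mat_invariant B2 S \<and> mat_image r I \<subseteq> S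
          \<longrightarrow> S = carrier_vec n)"

definition cyclic_rep :: "nat \<Rightarrow> nat \<Rightarrow> 'k::field mat \<Rightarrow> 'k mat \<Rightarrow> 'k mat \<Rightarrow> 'k mat \<Rightarrow> 'k mat \<Rightarrow> bool" where
  "cyclic_rep r n B1 B2 B3 I J \<longleftrightarrow>
     B1 \<in> carrier_mat n n \<and> B2 \<in> carrier_mat n n \<and> B3 \<in> carrier_mat n n \<and>
     I \<in> carrier_mat n r \<and> J \<in> carrier_mat r n \<and>
     B1 * B2 - B2 * B1 + I * J = 0\<^sub>m n n \<and>
     J * B3 = shift_mat r * J \<and> B3 * I = I * shift_mat r \<and>
     B3 * B1 = B1 * B3 \<and> B3 * B2 = B2 * B3 \<and>
     (\<forall>S. is_subspace n S \<and> S \<noteq> carrier_vec n \<and> S \<noteq> {0\<^sub>v n} \<and>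
          mat_invariant B1 S \<and> mat_invariant B2 S \<and> mat_invariant B3 S
          \<longrightarrow> \<not> mat_image r I \<subseteq> S)"

definition gl_pair :: "nat \<Rightarrow> 'k::field mat \<Rightarrow> 'k mat \<Rightarrow> bool" where
  "gl_pair n g h \<longleftrightarrow> g \<in> carrier_mat n n \<and> h \<in> carrier_mat n n \<and> g * h = 1\<^sub>m n \<and> h * g = 1\<^sub>m n"

text \<open>Two ADHM data are in the same GL(V)-orbit (same K-point of A(r,n)).\<close>
definition ADHM_equiv :: "nat \<Rightarrow> ('k::field mat \<times> 'k mat \<times> 'k mat \<times> 'k mat) \<Rightarrow>
    ('k mat \<times> 'k mat \<times> 'k mat \<times> 'k mat) \<Rightarrow> bool" where
  "ADHM_equiv n X Y \<longleftrightarrow> (case X of (B1, B2, I, J) \<Rightarrow> case Y of (C1, C2, I', J') \<Rightarrow>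
     (\<exists>g h. gl_pair n g h \<and> C1 = g * B1 * h \<and> C2 = g * B2 * h \<and> I' = g * I \<and> J' = J * h))"

text \<open>Two cyclic representations are in the same GL(V)-orbit (same K-point of Q(r,n)).\<close>
definition cyclic_equiv :: "nat \<Rightarrow> ('k::field mat \<times> 'k mat \<times> 'k mat \<times> 'k mat \<times> 'k mat) \<Rightarrow>
    ('k mat \<times> 'k mat \<times> 'k mat \<times> 'k mat \<times> 'k mat) \<Rightarrow> bool" where
  "cyclic_equiv n X Y \<longleftrightarrow> (case X of (B1, B2, B3, I, J) \<Rightarrow> case Y of (C1, C2, C3, I', J') \<Rightarrow>
     (\<exists>g h. gl_pair n g h \<and> C1 = g * B1 * h \<and> C2 = g * B2 * h \<and> C3 = g * B3 * h \<and>
            I' = g * I \<and> J' = J * h))"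

text \<open>K contains the complex numbers: a ring embedding of complex into K.\<close>
definition complex_embedding :: "(complex \<Rightarrow> 'k::field) \<Rightarrow> bool" where
  "complex_embedding \<phi> \<longleftrightarrow> \<phi> 1 = 1 \<and> (\<forall>x y. \<phi> (x + y) = \<phi> x + \<phi> y) \<and>
     (\<forall>x y. \<phi> (x * y) = \<phi> x * \<phi> y)"

end

theory Submission
  imports Defs
begin
lemma mat_eq_from_vec:
  assumes "E \<in> carrier_mat n n" "F \<in> carrier_mat n n"
    "\<And>v. v \<in> carrier_vec n \<Longrightarrow> E *\<^sub>v v = F *\<^sub>v v"
  shows "E = (F :: 'k::field mat)"
proof (rule eq_matI)
  fix i j assume ij: "i < dim_row F" "j < dim_col F"
  have "E *\<^sub>v unit_vec n j = F *\<^sub>v unit_vec n j" using assms(3) by simp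
  hence "(E *\<^sub>v unit_vec n j) $ i = (F *\<^sub>v unit_vec n j) $ i" by simp
  thus "E $$ (i,j) = F $$ (i,j)" using assms ij
    by (simp add: mult_mat_vec_def)
qed (use assms in auto)

lemma uniq_B3:
  fixes E F :: "'k::field mat"
  assumes st: "stable_ADHM r n B1 B2 I J"
    and c: "E \<in> carrier_mat n n" "F \<in> carrier_mat n n" "A \<in> carrier_mat r r"
    and e: "E * B1 = B1 * E" "E * B2 = B2 * E" "E * I = I * A"
    and f: "F * B1 = B1 * F" "F * B2 = B2 * F" "F * I = I * A"
  shows "E = F"
proof -
  from st have b: "B1 \<in> carrier_mat n n" "B2 \<in> carrier_mat n n" "I \<in> carrier_mat n r"
    unfolding stable_ADHM_def by auto
  define S where "S = {v \<in> carrier_vec n. E *\<^sub>v v = F *\<^sub>v v}"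
  have sub: "is_subspace n S" unfolding is_subspace_def S_def
    using c by (auto simp: mult_add_distrib_mat_vec mult_mat_vec)
  have inv: "mat_invariant B1 S" "mat_invariant B2 S"
    unfolding mat_invariant_def S_def
  proof (auto)
    fix v :: "'k vec" assume v: "v \<in> carrier_vec n" "E *\<^sub>v v = F *\<^sub>v v"
    have "E *\<^sub>v (B1 *\<^sub>v v) = (E * B1) *\<^sub>v v" using v b c by simp
    also have "\<dots> = B1 *\<^sub>v (E *\<^sub>v v)" using e v b c by simp
    also have "\<dots> = (B1 * F) *\<^sub>v v" using v b c by simp
    also have "\<dots> = F *\<^sub>v (B1 *\<^sub>v v)" using f v b c by (metis assoc_mult_mat_vec)
    finally show "E *\<^sub>v (B1 *\<^sub>v v) = F *\<^sub>v (B1 *\<^sub>v v)" .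
    have "E *\<^sub>v (B2 *\<^sub>v v) = (E * B2) *\<^sub>v v" using v b c by simp
    also have "\<dots> = B2 *\<^sub>v (E *\<^sub>v v)" using e v b c by simp
    also have "\<dots> = (B2 * F) *\<^sub>v v" using v b c by simp
    also have "\<dots> = F *\<^sub>v (B2 *\<^sub>v v)" using f v b c by (metis assoc_mult_mat_vec)
    finally show "E *\<^sub>v (B2 *\<^sub>v v) = F *\<^sub>v (B2 *\<^sub>v v)" .
  qed (use b in auto)
  have img: "mat_image r I \<subseteq> S" unfolding mat_image_def S_def
  proof auto
    fix w :: "'k vec" assume w: "w \<in> carrier_vec r"
    show "I *\<^sub>v w \<in> carrier_vec n" using b w by simp
    have "E *\<^sub>v (I *\<^sub>v w) = (E * I) *\<^sub>v w" using w b c by simp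
    also have "\<dots> = (F * I) *\<^sub>v w" using e f by simp
    also have "\<dots> = F *\<^sub>v (I *\<^sub>v w)" using w b c by simp
    finally show "E *\<^sub>v (I *\<^sub>v w) = F *\<^sub>v (I *\<^sub>v w)" .
  qed
  have "S = carrier_vec n" using st sub inv img unfolding stable_ADHM_def by blast
  thus ?thesis using c by (intro mat_eq_from_vec[of E n F]) (auto simp: S_def)
qed
lemma transport:
  fixes C1 :: "'k::field mat"
  assumes cy: "cyclic_rep r n C1 C2 C3 I1 J1" and gl: "gl_pair n g h"
  shows "g * C3 * h \<in> carrier_mat n n"
    "(g * C3 * h) * (g * C1 * h) = (g * C1 * h) * (g * C3 * h)"
    "(g * C3 * h) * (g * C2 * h) = (g * C2 * h) * (g * C3 * h)"
    "(g * C3 * h) * (g * I1) = (g * I1) * shift_mat r"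
proof -
  from cy have c: "C1 \<in> carrier_mat n n" "C2 \<in> carrier_mat n n" "C3 \<in> carrier_mat n n"
     "I1 \<in> carrier_mat n r" and rel: "C3 * C1 = C1 * C3" "C3 * C2 = C2 * C3"
     "C3 * I1 = I1 * shift_mat r"
    unfolding cyclic_rep_def by auto
  from gl have g: "g \<in> carrier_mat n n" "h \<in> carrier_mat n n" "h * g = 1\<^sub>m n"
    unfolding gl_pair_def by auto
  have A: "shift_mat r \<in> (carrier_mat r r :: 'k mat set)" unfolding shift_mat_def by simp
  show "g * C3 * h \<in> carrier_mat n n" using c g by simp
  have key: "\<And>X Y. X \<in> carrier_mat n n \<Longrightarrow> Y \<in> carrier_mat n n \<Longrightarrow>
     (g * X * h) * (g * Y * h) = g * (X * Y) * h"
  proof -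
    fix X Y :: "'k mat" assume X: "X \<in> carrier_mat n n" and Y: "Y \<in> carrier_mat n n"
    have "(g * X * h) * (g * Y * h) = g * X * (h * g) * Y * h"
      using X Y g(1,2) by (simp add: assoc_mult_mat[of _ n n _ n _ n])
    also have "\<dots> = g * X * Y * h" using X Y g by simp
    also have "\<dots> = g * (X * Y) * h" using X Y g by (simp add: assoc_mult_mat[of _ n n _ n _ n])
    finally show "(g * X * h) * (g * Y * h) = g * (X * Y) * h" .
  qed
  show "(g * C3 * h) * (g * C1 * h) = (g * C1 * h) * (g * C3 * h)"
    using key c rel by metis
  show "(g * C3 * h) * (g * C2 * h) = (g * C2 * h) * (g * C3 * h)"
    using key c rel by metis
  have "(g * C3 * h) * (g * I1) = g * C3 * (h * g) * I1"
    using c g(1,2) by (simp add: assoc_mult_mat[of _ n n _ n _ r])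
  also have "\<dots> = g * C3 * I1" using c g by simp
  also have "\<dots> = g * (C3 * I1)" using c g by (simp add: assoc_mult_mat[of _ n n _ n _ r])
  also have "\<dots> = (g * I1) * shift_mat r" using c g A rel by (simp add: assoc_mult_mat[of _ n n _ r _ r])
  finally show "(g * C3 * h) * (g * I1) = (g * I1) * shift_mat r" .
qed
lemma conj_back:
  fixes X :: "'k::field mat"
  assumes "gl_pair n g h" "X \<in> carrier_mat n n"
  shows "h * (g * X * h) * g = X"
proof -
  from assms have g: "g \<in> carrier_mat n n" "h \<in> carrier_mat n n" "h * g = 1\<^sub>m n"
    unfolding gl_pair_def by auto
  have "h * (g * X * h) * g = (h * g) * X * (h * g)"
    using g(1,2) assms(2) by (simp add: assoc_mult_mat[of _ n n _ n _ n])
  thus ?thesis using g assms(2) by simp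
qed

lemma conj_comp:
  fixes X :: "'k::field mat"
  assumes "g1 \<in> carrier_mat n n" "h1 \<in> carrier_mat n n" "g2 \<in> carrier_mat n n" "h2 \<in> carrier_mat n n"
    "X \<in> carrier_mat n n"
  shows "h2 * (g1 * X * h1) * g2 = (h2 * g1) * X * (h1 * g2)"
  using assms by (simp add: assoc_mult_mat[of _ n n _ n _ n])

theorem lemma3p5:
  fixes \<phi> :: "complex \<Rightarrow> 'k::field"
    and r n :: nat
    and B1 B2 I J :: "'k mat"
    and X Y :: "'k mat \<times> 'k mat \<times> 'k mat \<times> 'k mat \<times> 'k mat"
  assumes "complex_embedding \<phi>"
    and "stable_ADHM r n B1 B2 I J"
    and "case X of (C1, C2, C3, I', J') \<Rightarrow>
           cyclic_rep r n C1 C2 C3 I' J' \<and> ADHM_equiv n (C1, C2, I', J') (B1, B2, I, J)"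
    and "case Y of (D1, D2, D3, I'', J'') \<Rightarrow>
           cyclic_rep r n D1 D2 D3 I'' J'' \<and> ADHM_equiv n (D1, D2, I'', J'') (B1, B2, I, J)"
  shows "cyclic_equiv n X Y"
proof -
  obtain C1 C2 C3 I1 J1 where X: "X = (C1, C2, C3, I1, J1)" by (cases X) auto
  obtain D1 D2 D3 I2 J2 where Y: "Y = (D1, D2, D3, I2, J2)" by (cases Y) auto
  from assms(3) X have cx: "cyclic_rep r n C1 C2 C3 I1 J1" and
    "ADHM_equiv n (C1, C2, I1, J1) (B1, B2, I, J)" by auto
  then obtain g1 h1 where gl1: "gl_pair n g1 h1" and e1: "B1 = g1 * C1 * h1" "B2 = g1 * C2 * h1"
    "I = g1 * I1" "J = J1 * h1" unfolding ADHM_equiv_def by auto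
  from assms(4) Y have cy: "cyclic_rep r n D1 D2 D3 I2 J2" and
    "ADHM_equiv n (D1, D2, I2, J2) (B1, B2, I, J)" by auto
  then obtain g2 h2 where gl2: "gl_pair n g2 h2" and e2: "B1 = g2 * D1 * h2" "B2 = g2 * D2 * h2"
    "I = g2 * I2" "J = J2 * h2" unfolding ADHM_equiv_def by auto
  have A: "shift_mat r \<in> (carrier_mat r r :: 'k mat set)" unfolding shift_mat_def by simp
  note t1 = transport[OF cx gl1] and t2 = transport[OF cy gl2]
  have EF: "g1 * C3 * h1 = g2 * D3 * h2"
    apply (rule uniq_B3[OF assms(2) t1(1) t2(1) A])
    using t1 t2 e1 e2 by metis+
  from cx have cc: "C1 \<in> carrier_mat n n" "C2 \<in> carrier_mat n n" "C3 \<in> carrier_mat n n"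
     "I1 \<in> carrier_mat n r" "J1 \<in> carrier_mat r n" unfolding cyclic_rep_def by auto
  from cy have cd: "D1 \<in> carrier_mat n n" "D2 \<in> carrier_mat n n" "D3 \<in> carrier_mat n n"
     "I2 \<in> carrier_mat n r" "J2 \<in> carrier_mat r n" unfolding cyclic_rep_def by auto
  from gl1 have g1: "g1 \<in> carrier_mat n n" "h1 \<in> carrier_mat n n" "g1 * h1 = 1\<^sub>m n" "h1 * g1 = 1\<^sub>m n"
    unfolding gl_pair_def by auto
  from gl2 have g2: "g2 \<in> carrier_mat n n" "h2 \<in> carrier_mat n n" "g2 * h2 = 1\<^sub>m n" "h2 * g2 = 1\<^sub>m n"
    unfolding gl_pair_def by auto
  have gl: "gl_pair n (h2 * g1) (h1 * g2)"
  proof -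
    have "(h2 * g1) * (h1 * g2) = h2 * (g1 * h1) * g2"
      using g1(1,2) g2(1,2) by (simp add: assoc_mult_mat[of _ n n _ n _ n])
    hence a: "(h2 * g1) * (h1 * g2) = 1\<^sub>m n" using g1 g2 by simp
    have "(h1 * g2) * (h2 * g1) = h1 * (g2 * h2) * g1"
      using g1(1,2) g2(1,2) by (simp add: assoc_mult_mat[of _ n n _ n _ n])
    hence b: "(h1 * g2) * (h2 * g1) = 1\<^sub>m n" using g1 g2 by simp
    show ?thesis unfolding gl_pair_def using a b g1 g2 by auto
  qed
  have m: "\<And>U V. U \<in> carrier_mat n n \<Longrightarrow> V \<in> carrier_mat n n \<Longrightarrow> g1 * U * h1 = g2 * V * h2 \<Longrightarrow>
      V = (h2 * g1) * U * (h1 * g2)"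
    by (metis conj_back[OF gl2] conj_comp[OF g1(1,2) g2(1,2)])
  have d1: "D1 = (h2 * g1) * C1 * (h1 * g2)" using m[OF cc(1) cd(1)] e1 e2 by simp
  have d2: "D2 = (h2 * g1) * C2 * (h1 * g2)" using m[OF cc(2) cd(2)] e1 e2 by simp
  have d3: "D3 = (h2 * g1) * C3 * (h1 * g2)" using m[OF cc(3) cd(3)] EF by simp
  have i2: "I2 = (h2 * g1) * I1"
  proof -
    have "I2 = (h2 * g2) * I2" using g2 cd by simp
    also have "\<dots> = h2 * (g2 * I2)" using g2(1,2) cd by (simp add: assoc_mult_mat[of _ n n _ n _ r])
    also have "\<dots> = h2 * (g1 * I1)" using e1 e2 by simp
    also have "\<dots> = (h2 * g1) * I1" using g1 g2 cc by (simp add: assoc_mult_mat[of _ n n _ n _ r])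
    finally show ?thesis .
  qed
  have j2: "J2 = J1 * (h1 * g2)"
  proof -
    have "J2 = J2 * (h2 * g2)" using g2 cd by simp
    also have "\<dots> = (J2 * h2) * g2" using g2(1,2) cd by (simp add: assoc_mult_mat[of _ r n _ n _ n])
    also have "\<dots> = (J1 * h1) * g2" using e1 e2 by simp
    also have "\<dots> = J1 * (h1 * g2)" using g1 g2 cc by (simp add: assoc_mult_mat[of _ r n _ n _ n])
    finally show ?thesis .
  qed
  show ?thesis unfolding X Y cyclic_equiv_def using gl d1 d2 d3 i2 j2 by auto
qed
end
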